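(* For every integer $g\ge 0$, let $n'_g$ denote the number of gapsets of genus $g$ and depth at most $3$. Then for all $g \ge 2$, $n'_g \ge n'_{g-1}+n'_{g-2}$.
   Context: A gapset is a finite set $G \subset \mathbb{N}_+=\{1,2,3,\dots\}$ such that for all $z \in G$, whenever $z=x+y$ with $x,y\in\mathbb{N}_+$, we have $x\in G$ or $y\in G$. The multiplicity of $G$ is the least $m\ge 1$ with $m\notin G$; its conductor is $c=\max G+1$ (with $c=0$ if $G=\emptyset$); its genus is $|G|$; its depth is $\lceil c/m\rceil$. *)

theory Defs
  imports Complex_Main
begin

definition gapset :: "nat set \<Rightarrow> bool" where
  "gapset G \<longleftrightarrow> finite G \<and> 0 \<notin> G \<and>
     (\<forall>z\<in>G. \<forall>x y. x > 0 \<and> y > 0 \<and> z = x + y \<longrightarrow> x \<in> G \<or> y \<in> G)"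

definition multiplicity_gs :: "nat set \<Rightarrow> nat" where
  "multiplicity_gs G = (LEAST m. m \<ge> 1 \<and> m \<notin> G)"

definition conductor_gs :: "nat set \<Rightarrow> nat" where
  "conductor_gs G = (if G = {} then 0 else Max G + 1)"

definition genus_gs :: "nat set \<Rightarrow> nat" where
  "genus_gs G = card G"

definition depth_gs :: "nat set \<Rightarrow> int" where
  "depth_gs G = ceiling ((of_nat (conductor_gs G) :: rat) / of_nat (multiplicity_gs G))"

definition n_depth3 :: "nat \<Rightarrow> nat" where
  "n_depth3 g = card {G. gapset G \<and> genus_gs G = g \<and> depth_gs G \<le> 3}"

end

theory Submission
  imports Defs
begin

lemma mult_facts:
  assumes "gapset G"
  shows "1 \<le> multiplicity_gs G \<and> multiplicity_gs G \<notin> G \<and>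
         (\<forall>x. 1 \<le> x \<and> x < multiplicity_gs G \<longrightarrow> x \<in> G)"
proof -
  have fin: "finite (insert 0 G)" using assms unfolding gapset_def by auto
  obtain k where k: "k \<notin> insert 0 G" using ex_new_if_finite[OF infinite_UNIV_nat fin] by auto
  hence ex: "\<exists>k. k \<ge> 1 \<and> k \<notin> G" by (intro exI[of _ k]) auto
  have "multiplicity_gs G \<ge> 1 \<and> multiplicity_gs G \<notin> G"
    unfolding multiplicity_gs_def using LeastI_ex[OF ex] by simp
  moreover have "\<forall>x. 1 \<le> x \<and> x < multiplicity_gs G \<longrightarrow> x \<in> G"
    unfolding multiplicity_gs_def using not_less_Least by blast
  ultimately show ?thesis by blast
qed

lemma depth_iff:
  assumes "gapset G"
  shows "depth_gs G \<le> 3 \<longleftrightarrow> (\<forall>x\<in>G. x < 3 * multiplicity_gs G)"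
proof -
  define m where "m = multiplicity_gs G"
  define c where "c = conductor_gs G"
  have m1: "m \<ge> 1" using mult_facts[OF assms] m_def by simp
  have fin: "finite G" using assms unfolding gapset_def by auto
  have "depth_gs G \<le> 3 \<longleftrightarrow> (of_nat c :: rat) / of_nat m \<le> 3"
    unfolding depth_gs_def c_def m_def by (simp add: ceiling_le_iff)
  also have "\<dots> \<longleftrightarrow> (of_nat c :: rat) \<le> 3 * of_nat m"
    using m1 by (simp add: divide_le_eq)
  also have "\<dots> \<longleftrightarrow> (of_nat c :: rat) \<le> of_nat (3 * m)" by simp
  also have "\<dots> \<longleftrightarrow> c \<le> 3 * m" by (rule of_nat_le_iff)
  also have "\<dots> \<longleftrightarrow> (\<forall>x\<in>G. x < 3 * m)"
  proof (cases "G = {}")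
    case True thus ?thesis unfolding c_def conductor_gs_def by simp
  next
    case False
    have "c = Max G + 1" unfolding c_def conductor_gs_def using False by simp
    moreover have "Max G < 3 * m \<longleftrightarrow> (\<forall>x\<in>G. x < 3 * m)" by (rule Max_less_iff[OF fin False])
    ultimately show ?thesis by linarith
  qed
  finally show ?thesis unfolding m_def .
qed

definition fm :: "nat \<Rightarrow> nat \<Rightarrow> nat" where
  "fm m x = (if x < m then x else if x < 2*m then x+1 else x+2)"

definition phi :: "bool \<Rightarrow> nat set \<Rightarrow> nat set" where
  "phi b G = (if b then {2 * multiplicity_gs G + 1} else {}) \<union>
      insert (multiplicity_gs G) (fm (multiplicity_gs G) ` G)"


lemma fm_cases:
  "(w < m \<and> fm m w = w) \<or> (m \<le> w \<and> w < 2*m \<and> fm m w = w+1) \<or> (2*m \<le> w \<and> fm m w = w+2)"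
proof (cases "w < m")
  case True thus ?thesis unfolding fm_def by simp
next
  case False thus ?thesis unfolding fm_def by (cases "w < 2*m") simp_all
qed

lemma fm_inj: "inj (fm m)"
proof (rule injI)
  fix x y assume "fm m x = fm m y"
  thus "x = y" using fm_cases[of x m] fm_cases[of y m] by (elim disjE conjE) linarith+
qed

lemma phi_props:
  assumes "gapset G" "depth_gs G \<le> 3"
  shows "gapset (phi b G) \<and> depth_gs (phi b G) \<le> 3 \<and>
         multiplicity_gs (phi b G) = multiplicity_gs G + 1 \<and>
         card (phi b G) = card G + (if b then 2 else 1) \<and>
         (2 * multiplicity_gs G + 1 \<in> phi b G \<longleftrightarrow> b) \<and>
         fm (multiplicity_gs G) ` G = phi b G - {multiplicity_gs G, 2 * multiplicity_gs G + 1}"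
proof -
  define m where "m = multiplicity_gs G"
  define H where "H = phi b G"
  have H: "H = (if b then {2*m+1} else {}) \<union> insert m (fm m ` G)"
    unfolding H_def phi_def m_def by simp
  have fin: "finite G" and z0: "0 \<notin> G"
   and cl: "\<And>z x y. z \<in> G \<Longrightarrow> x > 0 \<Longrightarrow> y > 0 \<Longrightarrow> z = x + y \<Longrightarrow> x \<in> G \<or> y \<in> G"
    using assms(1) unfolding gapset_def by blast+
  have m1: "m \<ge> 1" and mG: "m \<notin> G" and low: "\<And>x. 1 \<le> x \<Longrightarrow> x < m \<Longrightarrow> x \<in> G"
    using mult_facts[OF assms(1)] m_def by auto
  have up: "\<And>x. x \<in> G \<Longrightarrow> x < 3*m" using depth_iff[OF assms(1)] assms(2) m_def by auto
  have m2: "2*m \<notin> G" using cl[of "2*m" m m] mG m1 by (auto simp: mult_2)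
  have Hlow: "\<And>x. 1 \<le> x \<Longrightarrow> x \<le> m \<Longrightarrow> x \<in> H"
  proof -
    fix x assume "1 \<le> x" "x \<le> m"
    show "x \<in> H"
    proof (cases "x = m")
      case True thus ?thesis using H by auto
    next
      case False
      hence "x \<in> G" "fm m x = x" using low \<open>1 \<le> x\<close> \<open>x \<le> m\<close> fm_def by auto
      thus ?thesis using H by (metis UnI2 imageI insertI2)
    qed
  qed
  have Hmem: "\<And>x. x \<in> H \<Longrightarrow> x = 2*m+1 \<or> x = m \<or> (\<exists>w\<in>G. x = fm m w)"
    using H by (cases b) auto
  have fup: "\<And>w. w \<in> G \<Longrightarrow> fm m w < 3*(m+1)"
  proof -
    fix w assume "w \<in> G" hence "w < 3*m" by (rule up)
    thus "fm m w < 3*(m+1)" unfolding fm_def by simp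
  qed
  have Hup: "x < 3*(m+1)" if xH: "x \<in> H" for x
  proof -
    have "x = 2*m+1 \<or> x = m \<or> (\<exists>w\<in>G. x = fm m w)" using Hmem[OF xH] .
    moreover have "2*m+1 < 3*(m+1)" by simp
    moreover have "m < 3*(m+1)" by simp
    ultimately show ?thesis using fup by auto
  qed
  have Hm1: "m+1 \<notin> H"
  proof
    assume "m+1 \<in> H"
    moreover have "m+1 \<noteq> 2*m+1" "m+1 \<noteq> m" using m1 by linarith+
    ultimately obtain w where w: "w \<in> G" "m+1 = fm m w" using Hmem by blast
    have "w \<noteq> m"
    proof
      assume "w = m" with w(1) mG show False by simp
    qed
    thus False using fm_cases[of w m] w(2) by (elim disjE conjE) linarith+
  qed
  have H0: "0 \<notin> H"
  proof
    assume "0 \<in> H"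
    moreover have "0 \<noteq> 2*m+1" "0 \<noteq> m" using m1 by linarith+
    ultimately obtain w where w: "w \<in> G" "0 = fm m w" using Hmem by blast
    have "w \<noteq> 0"
    proof
      assume "w = 0" with w(1) z0 show False by simp
    qed
    thus False using fm_cases[of w m] w(2) m1 by (elim disjE conjE) linarith+
  qed
  have Hfin: "finite H" unfolding H using fin by simp
  have Hcl: "x \<in> H \<or> y \<in> H" if zH: "z \<in> H" and xy: "x > 0" "y > 0" "z = x + y" for x y z
  proof (cases "x \<le> m \<or> y \<le> m")
    case True thus ?thesis
    proof
      assume "x \<le> m" hence "x \<in> H" using Hlow[of x] xy(1) by linarith
      thus ?thesis by blast
    next
      assume "y \<le> m" hence "y \<in> H" using Hlow[of y] xy(2) by linarith
      thus ?thesis by blast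
    qed
  next
    case False
    hence big: "x \<ge> m+1" "y \<ge> m+1" by linarith+
    have "z \<noteq> m" "z \<noteq> 2*m+1" using big xy(3) by linarith+
    then obtain w where w: "w \<in> G" "z = fm m w" using zH Hmem by blast
    have w2: "w \<noteq> 2*m"
    proof
      assume "w = 2*m" with w(1) m2 show False by simp
    qed
    have wz: "z = w + 2 \<and> w > 2*m" using fm_cases[of w m] w(2) w2 big xy(3)
      by (elim disjE conjE) linarith+
    have we: "w = (x-1) + (y-1)" using wz xy(3) big by linarith
    have p0: "0 < x-1" "0 < y-1" using big m1 by linarith+
    have "x - 1 \<in> G \<or> y - 1 \<in> G" using cl[OF w(1) p0 we] .
    thus ?thesis
    proof
      assume a: "x - 1 \<in> G"
      have "x - 1 < 2*m" using up[OF w(1)] wz xy big by linarith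
      hence "fm m (x-1) = x" using big unfolding fm_def by simp
      moreover have "fm m (x-1) \<in> fm m ` G" using a by (rule imageI)
      ultimately have "x \<in> fm m ` G" by simp
      hence "x \<in> H" unfolding H by blast
      thus ?thesis by blast
    next
      assume a: "y - 1 \<in> G"
      have "y - 1 < 2*m" using up[OF w(1)] wz xy big by linarith
      hence "fm m (y-1) = y" using big unfolding fm_def by simp
      moreover have "fm m (y-1) \<in> fm m ` G" using a by (rule imageI)
      ultimately have "y \<in> fm m ` G" by simp
      hence "y \<in> H" unfolding H by blast
      thus ?thesis by blast
    qed
  qed
  have gH: "gapset H" unfolding gapset_def using Hfin H0 Hcl by blast
  have mH: "multiplicity_gs H = m + 1"
    unfolding multiplicity_gs_def
  proof (rule Least_equality)
    show "1 \<le> m + 1 \<and> m + 1 \<notin> H" using Hm1 by simp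
  next
    fix y assume "1 \<le> y \<and> y \<notin> H" thus "m + 1 \<le> y" using Hlow by force
  qed
  have dH: "depth_gs H \<le> 3" using depth_iff[OF gH] mH Hup by simp
  have nm: "m \<notin> fm m ` G"
  proof
    assume "m \<in> fm m ` G"
    then obtain w where "w \<in> G" "m = fm m w" by blast
    thus False using fm_cases[of w m] mG m1 by auto
  qed
  have n2: "2*m+1 \<notin> insert m (fm m ` G)"
  proof
    assume "2*m+1 \<in> insert m (fm m ` G)"
    moreover have "2*m+1 \<noteq> m" using m1 by simp
    ultimately obtain w where "w \<in> G" "2*m+1 = fm m w" by blast
    thus False using fm_cases[of w m] m2 by auto
  qed
  have c1: "card (insert m (fm m ` G)) = card G + 1"
    using nm fin card_image[OF inj_on_subset[OF fm_inj subset_UNIV]] by simp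
  have c2: "card (insert (2*m+1) (insert m (fm m ` G))) = card G + 2"
    using c1 n2 fin by (subst card_insert_disjoint) auto
  have H2: "H = (if b then insert (2*m+1) (insert m (fm m ` G)) else insert m (fm m ` G))"
    using H by auto
  have cH: "card H = card G + (if b then 2 else 1)"
    unfolding H2 using c1 c2 by simp
  have b2: "2*m+1 \<in> H \<longleftrightarrow> b" using H n2 by auto
  have img: "fm m ` G = H - {m, 2*m+1}" using H n2 nm by auto
  show ?thesis using gH dH mH cH b2 img unfolding H_def m_def by simp
qed

definition S :: "nat \<Rightarrow> nat set set" where
  "S k = {G. gapset G \<and> genus_gs G = k \<and> depth_gs G \<le> 3}"

lemma S_fin: "finite (S k)"
proof (rule finite_subset[of _ "Pow {..<3*(k+1)}"])
  show "S k \<subseteq> Pow {..<3*(k+1)}"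
  proof
    fix G assume "G \<in> S k"
    hence g: "gapset G" "card G = k" "depth_gs G \<le> 3" unfolding S_def genus_gs_def by auto
    define m where "m = multiplicity_gs G"
    have "{1..<m} \<subseteq> G" using mult_facts[OF g(1)] m_def by auto
    moreover have "finite G" using g(1) unfolding gapset_def by auto
    ultimately have "card {1..<m} \<le> card G" by (rule card_mono[rotated])
    hence "card {1..<m} \<le> k" using g(2) by simp
    hence "m \<le> k + 1" by simp
    moreover have "\<forall>x\<in>G. x < 3*m" using depth_iff[OF g(1)] g(3) m_def by simp
    ultimately have "\<forall>x\<in>G. x < 3*(k+1)" by fastforce
    thus "G \<in> Pow {..<3*(k+1)}" by auto
  qed
qed simp

lemma phi_S:
  assumes "G \<in> S k" shows "phi b G \<in> S (k + (if b then 2 else 1))"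
proof -
  have g: "gapset G" "depth_gs G \<le> 3" "card G = k" using assms unfolding S_def genus_gs_def by auto
  note p = phi_props[OF g(1,2), of b]
  have "gapset (phi b G)" "depth_gs (phi b G) \<le> 3" "card (phi b G) = card G + (if b then 2 else 1)"
    using p by blast+
  thus ?thesis using g(3) unfolding S_def genus_gs_def by blast
qed

lemma phi_inj: "inj_on (phi b) (S k)"
proof (rule inj_onI)
  fix G G' assume a: "G \<in> S k" "G' \<in> S k" "phi b G = phi b G'"
  have g: "gapset G" "depth_gs G \<le> 3" "gapset G'" "depth_gs G' \<le> 3" using a unfolding S_def by auto
  note p = phi_props[OF g(1,2), of b] phi_props[OF g(3,4), of b]
  have m1: "multiplicity_gs (phi b G) = multiplicity_gs G + 1" using p by blast
  have m2: "multiplicity_gs (phi b G') = multiplicity_gs G' + 1" using p by blast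
  have e: "multiplicity_gs G = multiplicity_gs G'" using m1 m2 a(3) by simp
  have i1: "fm (multiplicity_gs G) ` G = phi b G - {multiplicity_gs G, 2 * multiplicity_gs G + 1}" using p by blast
  have i2: "fm (multiplicity_gs G') ` G' = phi b G' - {multiplicity_gs G', 2 * multiplicity_gs G' + 1}" using p by blast
  have "fm (multiplicity_gs G) ` G = fm (multiplicity_gs G) ` G'" using i1 i2 e a(3) by simp
  thus "G = G'" using fm_inj by (simp add: inj_image_eq_iff)
qed

theorem mainTheorem2:
  fixes g :: nat
  assumes "g \<ge> 2"
  shows "n_depth3 g \<ge> n_depth3 (g - 1) + n_depth3 (g - 2)"
proof -
  have n: "\<And>k. n_depth3 k = card (S k)" unfolding n_depth3_def S_def by simp
  have s1: "phi False ` S (g-1) \<subseteq> S g"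
  proof
    fix H assume "H \<in> phi False ` S (g-1)"
    then obtain G where G: "G \<in> S (g-1)" "H = phi False G" by auto
    have "g - 1 + (if False then 2 else 1) = g" using assms by simp
    thus "H \<in> S g" using phi_S[OF G(1), of False] G(2) by simp
  qed
  have s2: "phi True ` S (g-2) \<subseteq> S g"
  proof
    fix H assume "H \<in> phi True ` S (g-2)"
    then obtain G where G: "G \<in> S (g-2)" "H = phi True G" by auto
    have "g - 2 + (if True then 2 else 1) = g" using assms by simp
    thus "H \<in> S g" using phi_S[OF G(1), of True] G(2) by simp
  qed
  have disj: "phi False ` S (g-1) \<inter> phi True ` S (g-2) = {}"
  proof (rule ccontr)
    assume "\<not> ?thesis"
    then obtain G G' where G: "G \<in> S (g-1)" "G' \<in> S (g-2)" "phi False G = phi True G'" by auto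
    have g: "gapset G" "depth_gs G \<le> 3" "gapset G'" "depth_gs G' \<le> 3" using G unfolding S_def by auto
    note p = phi_props[OF g(1,2), of False] phi_props[OF g(3,4), of True]
    have m1: "multiplicity_gs (phi False G) = multiplicity_gs G + 1" using p by blast
    have m2: "multiplicity_gs (phi True G') = multiplicity_gs G' + 1" using p by blast
    have e: "multiplicity_gs G = multiplicity_gs G'" using m1 m2 G(3) by simp
    have "2 * multiplicity_gs G' + 1 \<in> phi True G'" using p by blast
    moreover have "2 * multiplicity_gs G + 1 \<notin> phi False G" using p by blast
    ultimately show False using e G(3) by simp
  qed
  have "card (S (g-1)) + card (S (g-2)) = card (phi False ` S (g-1)) + card (phi True ` S (g-2))"
    using card_image[OF phi_inj] by simp
  also have "\<dots> = card (phi False ` S (g-1) \<union> phi True ` S (g-2))"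
    using disj S_fin by (simp add: card_Un_disjoint)
  also have "\<dots> \<le> card (S g)" using s1 s2 S_fin by (intro card_mono) auto
  finally show ?thesis unfolding n by simp
qed

end
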